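(* Let $\mathcal{T}$ be a projective Fraïssé family of finite trees whose distinguished epimorphisms are monotone and which allows splitting edges. Let $\mathbb{G}$ be its projective Fraïssé limit and $\pi\colon\mathbb{G}\to|\mathbb{G}|$ its topological realization. If $p\in|\mathbb{G}|$ is a ramification point of the dendrite $|\mathbb{G}|$, then there is a unique $p'\in\mathbb{G}$ with $\pi(p')=p$.
   Context: Graphs have reflexive symmetric edge relations; topological graphs carry a compact, Hausdorff, zero-dimensional, second countable topology with closed edge set; finite graphs are discrete. An epimorphism $g\colon B\to A$ of topological graphs is a continuous surjection with: $\langle a_1,a_2\rangle\in E(A)$ iff some $b_i\in g^{-1}(a_i)$ satisfy $\langle b_1,b_2\rangle\in E(B)$. A topological graph is disconnected if its vertex set splits into two nonempty disjoint closed sets with no edges between them, and connected otherwise (subsets carry the induced edges and subspace topology). An epimorphism is monotone if every fibre $g^{-1}(a)$ is connected. A finite tree is a finite connected graph without cycles of nontrivial edges. A projective Fraïssé family is a class of finite graphs with a distinguished class of epimorphisms, countably many up to isomorphism, containing identities, closed under composition, with the joint projection property (any $A,B$ have a common $C$ with distinguished epimorphisms onto both) and projective amalgamation (distinguished $f\colon B\to A$, $g\colon C\to A$ admit $D$ and distinguished $h\colon D\to B$, $k\colon D\to C$ with $f\circ h=g\circ k$). A Fraïssé sequence is a sequence $(F_n)$ in the family with compatible distinguished epimorphisms $f^m_n\colon F_m\to F_n$ such that every member of the family is the image of some $F_n$ under a distinguished epimorphism, and for every distinguished $f\colon A\to F_m$ there exist $n\ge m$ and distinguished $g\colon F_n\to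 A$ with $f\circ g=f^n_m$; the projective Fraïssé limit is $\varprojlim F_n\subseteq\prod F_n$ with $\langle x,y\rangle$ an edge iff $\langle x_n,y_n\rangle$ is an edge for all $n$ (unique up to isomorphism). The family allows splitting edges if for every member $G$ and every nontrivial edge $\{a,b\}$, the graph obtained by replacing this edge by a path $a,\ast,b$ through a new vertex $\ast$ is in the family, and both maps collapsing $\ast$ to $a$, resp. to $b$ (identity elsewhere) are distinguished epimorphisms. Under these hypotheses the limit $\mathbb{G}$ is a prespace (its edge relation is an equivalence relation); its topological realization is the quotient map $\pi\colon\mathbb{G}\to|\mathbb{G}|=\mathbb{G}/E(\mathbb{G})$, and $|\mathbb{G}|$ is a dendrite (a compact metrizable connected locally connected space in which any two points are joined by a unique arc). A point $x$ of a dendrite $X$ is a ramification point if $X\setminus\{x\}$ has more than two connected components. *)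

theory Defs
  imports "HOL-Analysis.Analysis"
begin

text \<open>Vertices are natural numbers;
every finite graph is isomorphic to one of this form.\<close>

type_synonym fgraph = "nat set \<times> (nat \<times> nat) set"

definition verts :: "fgraph \<Rightarrow> nat set" where "verts G = fst G"
definition edges :: "fgraph \<Rightarrow> (nat \<times> nat) set" where "edges G = snd G"

definition fin_graph :: "fgraph \<Rightarrow> bool" where
  "fin_graph G \<longleftrightarrow> finite (verts G) \<and> edges G \<subseteq> verts G \<times> verts G
     \<and> (\<forall>v\<in>verts G. (v, v) \<in> edges G) \<and> (\<forall>a b. (a, b) \<in> edges G \<longrightarrow> (b, a) \<in> edges G)"

definition epi :: "fgraph \<Rightarrow> fgraph \<Rightarrow> (nat \<Rightarrow> nat) \<Rightarrow> bool" where
  "epi B A f \<longleftrightarrow> f ` verts B = verts A \<and>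
     (\<forall>a1 a2. (a1, a2) \<in> edges A \<longleftrightarrow>
        (\<exists>b1 b2. b1 \<in> verts B \<and> b2 \<in> verts B \<and> f b1 = a1 \<and> f b2 = a2 \<and> (b1, b2) \<in> edges B))"

text \<open>Connectedness of a subset S of a finite (discrete) graph: S cannot be split into two
nonempty disjoint (automatically closed) sets with no edges between them.\<close>
definition conn_set :: "fgraph \<Rightarrow> nat set \<Rightarrow> bool" where
  "conn_set G S \<longleftrightarrow> \<not> (\<exists>P Q. P \<noteq> {} \<and> Q \<noteq> {} \<and> P \<inter> Q = {} \<and> P \<union> Q = S \<and>
       (\<forall>p\<in>P. \<forall>q\<in>Q. (p, q) \<notin> edges G))"

definition monotone_epi :: "fgraph \<Rightarrow> fgraph \<Rightarrow> (nat \<Rightarrow> nat) \<Rightarrow> bool" where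
  "monotone_epi B A f \<longleftrightarrow> epi B A f \<and> (\<forall>a\<in>verts A. conn_set B {b\<in>verts B. f b = a})"

definition has_cycle :: "fgraph \<Rightarrow> bool" where
  "has_cycle G \<longleftrightarrow> (\<exists>vs. length vs \<ge> 3 \<and> distinct vs \<and> set vs \<subseteq> verts G \<and>
      (\<forall>i < length vs. (vs ! i, vs ! (Suc i mod length vs)) \<in> edges G))"

definition fin_tree :: "fgraph \<Rightarrow> bool" where
  "fin_tree G \<longleftrightarrow> fin_graph G \<and> verts G \<noteq> {} \<and> conn_set G (verts G) \<and> \<not> has_cycle G"

definition graph_iso :: "fgraph \<Rightarrow> fgraph \<Rightarrow> bool" where
  "graph_iso A B \<longleftrightarrow> (\<exists>h. bij_betw h (verts A) (verts B) \<and>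
      (\<forall>x\<in>verts A. \<forall>y\<in>verts A. (x, y) \<in> edges A \<longleftrightarrow> (h x, h y) \<in> edges B))"

text \<open>A family is a set \<F> of finite graphs together with a predicate D, where D B A f means
that f is a distinguished epimorphism from B onto A.\<close>
definition proj_fraisse_family ::
  "fgraph set \<Rightarrow> (fgraph \<Rightarrow> fgraph \<Rightarrow> (nat \<Rightarrow> nat) \<Rightarrow> bool) \<Rightarrow> bool" where
  "proj_fraisse_family \<F> D \<longleftrightarrow>
     (\<forall>G\<in>\<F>. fin_graph G) \<and>
     (\<forall>B A f. D B A f \<longrightarrow> B \<in> \<F> \<and> A \<in> \<F> \<and> epi B A f) \<and>
     (\<exists>C :: nat \<Rightarrow> fgraph. \<forall>G\<in>\<F>. \<exists>n. graph_iso G (C n)) \<and>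
     (\<forall>A\<in>\<F>. D A A id) \<and>
     (\<forall>A B C f g. D B A f \<longrightarrow> D C B g \<longrightarrow> D C A (f \<circ> g)) \<and>
     (\<forall>A\<in>\<F>. \<forall>B\<in>\<F>. \<exists>C\<in>\<F>. \<exists>f g. D C A f \<and> D C B g) \<and>
     (\<forall>A B C f g. D B A f \<longrightarrow> D C A g \<longrightarrow>
        (\<exists>E h k. D E B h \<and> D E C k \<and> (\<forall>x\<in>verts E. f (h x) = g (k x))))"

definition split_edge :: "fgraph \<Rightarrow> nat \<Rightarrow> nat \<Rightarrow> nat \<Rightarrow> fgraph" where
  "split_edge G a b v =
     (insert v (verts G),
      (edges G - {(a, b), (b, a)}) \<union> {(a, v), (v, a), (v, b), (b, v), (v, v)})"

definition collapse :: "nat \<Rightarrow> nat \<Rightarrow> nat \<Rightarrow> nat" where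
  "collapse v a x = (if x = v then a else x)"

definition allows_splitting_edges ::
  "fgraph set \<Rightarrow> (fgraph \<Rightarrow> fgraph \<Rightarrow> (nat \<Rightarrow> nat) \<Rightarrow> bool) \<Rightarrow> bool" where
  "allows_splitting_edges \<F> D \<longleftrightarrow>
     (\<forall>G\<in>\<F>. \<forall>a b. (a, b) \<in> edges G \<longrightarrow> a \<noteq> b \<longrightarrow>
        (\<exists>v. v \<notin> verts G \<and> split_edge G a b v \<in> \<F> \<and>
             D (split_edge G a b v) G (collapse v a) \<and>
             D (split_edge G a b v) G (collapse v b)))"

text \<open>Bonding maps: f n : F (n+1) \<rightarrow> F n; bond f m n : F m \<rightarrow> F n for n \<le> m.\<close>
fun bond :: "(nat \<Rightarrow> nat \<Rightarrow> nat) \<Rightarrow> nat \<Rightarrow> nat \<Rightarrow> nat \<Rightarrow> nat" where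
  "bond f 0 n = id"
| "bond f (Suc m) n = (if n \<le> m then bond f m n \<circ> f m else id)"

definition fraisse_sequence ::
  "fgraph set \<Rightarrow> (fgraph \<Rightarrow> fgraph \<Rightarrow> (nat \<Rightarrow> nat) \<Rightarrow> bool) \<Rightarrow>
   (nat \<Rightarrow> fgraph) \<Rightarrow> (nat \<Rightarrow> nat \<Rightarrow> nat) \<Rightarrow> bool" where
  "fraisse_sequence \<F> D F f \<longleftrightarrow>
     (\<forall>n. F n \<in> \<F> \<and> D (F (Suc n)) (F n) (f n)) \<and>
     (\<forall>A\<in>\<F>. \<exists>n g. D (F n) A g) \<and>
     (\<forall>A m h. D A (F m) h \<longrightarrow>
        (\<exists>n\<ge>m. \<exists>g. D (F n) A g \<and> (\<forall>x\<in>verts (F n). h (g x) = bond f n m x)))"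

definition lim_verts :: "(nat \<Rightarrow> fgraph) \<Rightarrow> (nat \<Rightarrow> nat \<Rightarrow> nat) \<Rightarrow> (nat \<Rightarrow> nat) set" where
  "lim_verts F f = {x. \<forall>n. x n \<in> verts (F n) \<and> f n (x (Suc n)) = x n}"

definition lim_edge :: "(nat \<Rightarrow> fgraph) \<Rightarrow> (nat \<Rightarrow> nat) \<Rightarrow> (nat \<Rightarrow> nat) \<Rightarrow> bool" where
  "lim_edge F x y \<longleftrightarrow> (\<forall>n. (x n, y n) \<in> edges (F n))"

definition lim_topology :: "(nat \<Rightarrow> fgraph) \<Rightarrow> (nat \<Rightarrow> nat \<Rightarrow> nat) \<Rightarrow> (nat \<Rightarrow> nat) topology" where
  "lim_topology F f =
     subtopology (product_topology (\<lambda>n. discrete_topology (verts (F n))) UNIV) (lim_verts F f)"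

text \<open>Topological realization: quotient map x \<mapsto> [x] onto the set of edge classes.\<close>
definition realization_map :: "(nat \<Rightarrow> fgraph) \<Rightarrow> (nat \<Rightarrow> nat \<Rightarrow> nat) \<Rightarrow> (nat \<Rightarrow> nat) \<Rightarrow> (nat \<Rightarrow> nat) set" where
  "realization_map F f x = {y \<in> lim_verts F f. lim_edge F x y}"

definition realization :: "(nat \<Rightarrow> fgraph) \<Rightarrow> (nat \<Rightarrow> nat \<Rightarrow> nat) \<Rightarrow> (nat \<Rightarrow> nat) set topology" where
  "realization F f = topology (\<lambda>U. U \<subseteq> realization_map F f ` lim_verts F f \<and>
      openin (lim_topology F f) {x \<in> lim_verts F f. realization_map F f x \<in> U})"

definition ramification_point :: "'a topology \<Rightarrow> 'a \<Rightarrow> bool" where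
  "ramification_point X p \<longleftrightarrow> p \<in> topspace X \<and>
     (let C = connected_components_of (subtopology X (topspace X - {p}))
      in infinite C \<or> card C > 2)"

end

theory Submission
  imports Defs
begin
lemma edge_verts_g: "fin_graph G \<Longrightarrow> (a, b) \<in> edges G \<Longrightarrow> a \<in> verts G \<and> b \<in> verts G"
  unfolding fin_graph_def by (elim conjE) blast

lemma sym_edge_g: "fin_graph G \<Longrightarrow> (a, b) \<in> edges G \<Longrightarrow> (b, a) \<in> edges G"
  unfolding fin_graph_def by (elim conjE) blast

lemma epi_img_g: "epi B A g \<Longrightarrow> g ` verts B = verts A"
  unfolding epi_def by (elim conjE)

lemma epi_surj_g: "epi B A g \<Longrightarrow> a \<in> verts A \<Longrightarrow> \<exists>b\<in>verts B. g b = a"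
  using epi_img_g by (metis imageE)

lemma epi_iff_g: "epi B A g \<Longrightarrow> (a1, a2) \<in> edges A \<longleftrightarrow>
        (\<exists>b1 b2. b1 \<in> verts B \<and> b2 \<in> verts B \<and> g b1 = a1 \<and> g b2 = a2 \<and> (b1, b2) \<in> edges B)"
  unfolding epi_def by (elim conjE, drule spec, drule spec, assumption)

lemma conn_setD:
  assumes "conn_set G S" "P \<noteq> {}" "Q \<noteq> {}" "P \<inter> Q = {}" "P \<union> Q = S"
  shows "\<exists>p\<in>P. \<exists>q\<in>Q. (p, q) \<in> edges G"
proof (rule ccontr)
  assume "\<not> ?thesis"
  then have h: "\<forall>p\<in>P. \<forall>q\<in>Q. (p, q) \<notin> edges G" by blast
  have "\<exists>P Q. P \<noteq> {} \<and> Q \<noteq> {} \<and> P \<inter> Q = {} \<and> P \<union> Q = S \<and>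
       (\<forall>p\<in>P. \<forall>q\<in>Q. (p, q) \<notin> edges G)"
    by (intro exI[of _ P] exI[of _ Q] conjI assms(2-5) h)
  then show False using assms(1) unfolding conn_set_def by (elim notE)
qed

lemma conn_setI:
  assumes "\<And>P Q. P \<noteq> {} \<Longrightarrow> Q \<noteq> {} \<Longrightarrow> P \<inter> Q = {} \<Longrightarrow> P \<union> Q = S \<Longrightarrow> \<exists>p\<in>P. \<exists>q\<in>Q. (p, q) \<in> edges G"
  shows "conn_set G S"
  unfolding conn_set_def
proof (rule notI, elim exE conjE)
  fix P Q assume h: "P \<noteq> {}" "Q \<noteq> {}" "P \<inter> Q = {}" "P \<union> Q = S"
    "\<forall>p\<in>P. \<forall>q\<in>Q. (p, q) \<notin> edges G"
  from assms[OF h(1-4)] h(5) show False by blast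
qed

lemma conn_set_mono_edges:
  assumes c: "conn_set G S" and h: "\<forall>s\<in>S. \<forall>t\<in>S. (s, t) \<in> edges G \<longrightarrow> (s, t) \<in> edges H"
  shows "conn_set H S"
proof (rule conn_setI)
  fix P Q assume a: "P \<noteq> {}" "Q \<noteq> {}" "P \<inter> Q = {}" "P \<union> Q = S"
  then obtain p q where "p \<in> P" "q \<in> Q" "(p, q) \<in> edges G" using conn_setD[OF c] by blast
  moreover have "p \<in> S" "q \<in> S" using a(4) calculation(1,2) by blast+
  ultimately show "\<exists>p\<in>P. \<exists>q\<in>Q. (p, q) \<in> edges H" using h by blast
qed

lemma conn_set_cong:
  assumes "\<forall>s\<in>S. \<forall>t\<in>S. (s, t) \<in> edges G \<longleftrightarrow> (s, t) \<in> edges H"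
  shows "conn_set G S = conn_set H S"
  using conn_set_mono_edges assms by blast

lemma mono_preimage_conn:
  assumes me: "monotone_epi B A g" and T: "T \<subseteq> verts A" and cT: "conn_set A T"
  shows "conn_set B {b\<in>verts B. g b \<in> T}"
proof (rule conn_setI)
  fix P Q assume P: "P \<noteq> {}" and Q: "Q \<noteq> {}" and PQ: "P \<inter> Q = {}"
    and U: "P \<union> Q = {b\<in>verts B. g b \<in> T}"
  have memU: "b \<in> P \<or> b \<in> Q \<longleftrightarrow> b \<in> verts B \<and> g b \<in> T" for b
    using U by (metis (mono_tags, lifting) Un_iff mem_Collect_eq)
  have disj: "b \<in> P \<Longrightarrow> b \<notin> Q" for b using PQ by blast
  show "\<exists>p\<in>P. \<exists>q\<in>Q. (p, q) \<in> edges B"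
  proof (rule ccontr)
    assume ne: "\<not> ?thesis"
    have ep: "epi B A g" and fib: "\<And>a. a \<in> verts A \<Longrightarrow> conn_set B {b\<in>verts B. g b = a}"
      using me unfolding monotone_epi_def by auto
    have fibs: "(\<forall>b. b \<in> verts B \<and> g b = a \<longrightarrow> b \<in> P) \<or> (\<forall>b. b \<in> verts B \<and> g b = a \<longrightarrow> b \<in> Q)"
      if a: "a \<in> T" for a
    proof (rule ccontr)
      assume nn: "\<not> ?thesis"
      let ?X = "{b\<in>verts B. g b = a}"
      obtain b1 where b1: "b1 \<in> verts B" "g b1 = a" "b1 \<notin> P" using nn by blast
      obtain b2 where b2: "b2 \<in> verts B" "g b2 = a" "b2 \<notin> Q" using nn by blast
      have "b1 \<in> Q" using memU[of b1] b1 a by simp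
      have "b2 \<in> P" using memU[of b2] b2 a by simp
      have "\<exists>p\<in>P \<inter> ?X. \<exists>q\<in>Q \<inter> ?X. (p, q) \<in> edges B"
      proof (rule conn_setD[OF fib[of a], of "P \<inter> ?X" "Q \<inter> ?X"])
        show "a \<in> verts A" using a T by blast
        show "P \<inter> ?X \<noteq> {}" using \<open>b2 \<in> P\<close> b2 by blast
        show "Q \<inter> ?X \<noteq> {}" using \<open>b1 \<in> Q\<close> b1 by blast
        show "P \<inter> ?X \<inter> (Q \<inter> ?X) = {}" using PQ by blast
        show "P \<inter> ?X \<union> Q \<inter> ?X = ?X"
        proof
          show "P \<inter> ?X \<union> Q \<inter> ?X \<subseteq> ?X" by blast
          show "?X \<subseteq> P \<inter> ?X \<union> Q \<inter> ?X"
          proof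
            fix b assume "b \<in> ?X"
            then have "b \<in> P \<or> b \<in> Q" using memU[of b] a by simp
            then show "b \<in> P \<inter> ?X \<union> Q \<inter> ?X" using \<open>b \<in> ?X\<close> by blast
          qed
        qed
      qed
      then show False using ne by blast
    qed
    have c: "\<exists>p\<in>g ` P. \<exists>q\<in>g ` Q. (p, q) \<in> edges A"
    proof (rule conn_setD[OF cT])
      show "g ` P \<noteq> {}" "g ` Q \<noteq> {}" using P Q by auto
      show "g ` P \<inter> g ` Q = {}"
      proof (rule ccontr)
        assume "g ` P \<inter> g ` Q \<noteq> {}"
        then obtain p q where p: "p \<in> P" and q: "q \<in> Q" and e: "g p = g q" by blast
        have gp: "g p \<in> T" "p \<in> verts B" "q \<in> verts B" using p q memU by blast+
        from fibs[OF gp(1)] show False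
        proof (elim disjE)
          assume "\<forall>b. b \<in> verts B \<and> g b = g p \<longrightarrow> b \<in> P"
          then have "q \<in> P" using gp(3) e by simp
          then show False using disj q by blast
        next
          assume "\<forall>b. b \<in> verts B \<and> g b = g p \<longrightarrow> b \<in> Q"
          then have "p \<in> Q" using gp(2) by simp
          then show False using disj p by blast
        qed
      qed
      show "g ` P \<union> g ` Q = T"
      proof
        show "g ` P \<union> g ` Q \<subseteq> T" using memU by blast
        show "T \<subseteq> g ` P \<union> g ` Q"
        proof
          fix a assume a: "a \<in> T"
          then have "a \<in> verts A" using T by blast
          then obtain b where b: "b \<in> verts B" "g b = a" using epi_surj_g[OF ep] by blast
          then have "b \<in> P \<or> b \<in> Q" using memU a by blast
          then show "a \<in> g ` P \<union> g ` Q" using b by blast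
        qed
      qed
    qed
    then obtain p q where p: "p \<in> P" and q: "q \<in> Q" and e: "(g p, g q) \<in> edges A" by blast
    obtain b1 b2 where b: "b1 \<in> verts B" "b2 \<in> verts B" "g b1 = g p" "g b2 = g q" "(b1, b2) \<in> edges B"
      using epi_iff_g[OF ep, of "g p" "g q"] e by blast
    have gpT: "g p \<in> T" "g q \<in> T" "p \<in> verts B" "q \<in> verts B" using p q memU by blast+
    have "b1 \<in> P"
      using fibs[OF gpT(1)]
    proof (elim disjE)
      assume "\<forall>b. b \<in> verts B \<and> g b = g p \<longrightarrow> b \<in> Q"
      then have "p \<in> Q" using gpT(3) by simp
      then show ?thesis using disj p by blast
    qed (use b in simp)
    moreover have "b2 \<in> Q"
      using fibs[OF gpT(2)]
    proof (elim disjE)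
      assume "\<forall>b. b \<in> verts B \<and> g b = g q \<longrightarrow> b \<in> P"
      then have "q \<in> P" using gpT(4) by simp
      then show ?thesis using disj q by blast
    qed (use b in simp)
    ultimately show False using ne b(5) by blast
  qed
qed

lemma reach_conn:
  assumes a: "a \<in> verts G" and R: "R \<subseteq> edges G" and fg: "fin_graph G"
  shows "conn_set G {t\<in>verts G. (a, t) \<in> R\<^sup>*}"
proof (rule conn_setI)
  fix P Q assume P: "P \<noteq> {}" and Q: "Q \<noteq> {}" and PQ: "P \<inter> Q = {}"
    and U: "P \<union> Q = {t\<in>verts G. (a, t) \<in> R\<^sup>*}"
  show "\<exists>p\<in>P. \<exists>q\<in>Q. (p, q) \<in> edges G"
  proof (rule ccontr)
    assume ne: "\<not> ?thesis"
    have inv: "(a, t) \<in> R\<^sup>* \<Longrightarrow> a \<in> X \<Longrightarrow> t \<in> X"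
      if X: "X = P \<or> X = Q" for X t
    proof (induction rule: rtrancl_induct)
      case base then show ?case by simp
    next
      case (step c d)
      have cX: "c \<in> X" using step by blast
      have cd: "(c, d) \<in> edges G" using step R by blast
      then have "d \<in> verts G" using fg edge_verts_g by blast
      moreover have "(a, d) \<in> R\<^sup>*" using step(1,2) by (rule rtrancl.rtrancl_into_rtrancl)
      ultimately have "d \<in> P \<union> Q" using U by simp
      have dc: "(d, c) \<in> edges G" using sym_edge_g[OF fg cd] .
      show ?case
      proof (rule ccontr)
        assume dX: "d \<notin> X"
        from X show False
        proof
          assume "X = P"
          then have "c \<in> P" "d \<in> Q" using cX dX \<open>d \<in> P \<union> Q\<close> by auto
          then show False using ne cd by blast
        next
          assume "X = Q"
          then have "c \<in> Q" "d \<in> P" using cX dX \<open>d \<in> P \<union> Q\<close> by auto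
          then show False using ne dc by blast
        qed
      qed
    qed
    have "a \<in> P \<union> Q" using U a by simp
    then show False
    proof
      assume "a \<in> P"
      then have "Q \<subseteq> P" using inv[of P] U by blast
      then show False using Q PQ by blast
    next
      assume "a \<in> Q"
      then have "P \<subseteq> Q" using inv[of Q] U by blast
      then show False using P PQ by blast
    qed
  qed
qed

lemma conn_reach:
  assumes c: "conn_set G (verts G)" and a: "a \<in> verts G" and t: "t \<in> verts G"
  shows "(a, t) \<in> (edges G)\<^sup>*"
proof (rule ccontr)
  assume nt: "(a, t) \<notin> (edges G)\<^sup>*"
  let ?P = "{s\<in>verts G. (a, s) \<in> (edges G)\<^sup>*}"
  let ?Q = "verts G - ?P"
  have "\<exists>p\<in>?P. \<exists>q\<in>?Q. (p, q) \<in> edges G"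
    apply (rule conn_setD[OF c]) using a t nt by auto
  then obtain p q where "p \<in> ?P" "q \<in> ?Q" "(p, q) \<in> edges G" by blast
  then show False using rtrancl.rtrancl_into_rtrancl[of a p "edges G" q] by blast
qed

definition is_path :: "('a \<times> 'a) set \<Rightarrow> 'a list \<Rightarrow> bool" where
  "is_path R xs \<longleftrightarrow> (\<forall>i. Suc i < length xs \<longrightarrow> (xs ! i, xs ! Suc i) \<in> R)"

lemma rtrancl_dist_path:
  assumes "(a, b) \<in> R\<^sup>*"
  shows "\<exists>xs. xs \<noteq> [] \<and> xs ! 0 = a \<and> last xs = b \<and> distinct xs \<and> is_path R xs"
  using assms
proof (induction rule: rtrancl_induct)
  case base
  then show ?case by (rule exI[of _ "[a]"]) (simp add: is_path_def)
next
  case (step c d)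
  then obtain xs where xs: "xs \<noteq> []" "xs ! 0 = a" "last xs = c" "distinct xs" "is_path R xs" by blast
  show ?case
  proof (cases "d \<in> set xs")
    case True
    then obtain i where i: "i < length xs" "xs ! i = d" by (metis in_set_conv_nth)
    let ?ys = "take (Suc i) xs"
    have "?ys \<noteq> []" using xs by simp
    moreover have "?ys ! 0 = a" using xs by simp
    moreover have "last ?ys = d" using i by (simp add: take_Suc_conv_app_nth)
    moreover have "distinct ?ys" using xs by simp
    moreover have "is_path R ?ys" using xs(5) unfolding is_path_def by auto
    ultimately show ?thesis by blast
  next
    case False
    let ?ys = "xs @ [d]"
    have "?ys ! 0 = a" using xs by (simp add: nth_append)
    moreover have "distinct ?ys" using xs False by simp
    moreover have "is_path R ?ys" unfolding is_path_def
    proof (intro allI impI)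
      fix j assume j: "Suc j < length ?ys"
      show "(?ys ! j, ?ys ! Suc j) \<in> R"
      proof (cases "Suc j < length xs")
        case True
        then show ?thesis using xs(5) unfolding is_path_def by (simp add: nth_append)
      next
        case False
        then have "Suc j = length xs" using j by simp
        then have "j = length xs - 1" by simp
        then have "?ys ! j = c" "?ys ! Suc j = d" using xs(1,3) \<open>Suc j = length xs\<close>
          by (simp_all add: nth_append last_conv_nth)
        then show ?thesis using step by simp
      qed
    qed
    ultimately show ?thesis by auto
  qed
qed

lemma tree_no_bypass:
  assumes tr: "fin_tree G" and e: "(a, b) \<in> edges G" and ab: "a \<noteq> b"
  shows "(a, b) \<notin> (edges G - {(a, b), (b, a)})\<^sup>*"
proof
  let ?R = "edges G - {(a, b), (b, a)}"
  assume "(a, b) \<in> ?R\<^sup>*"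
  then have hR: "(a, b) \<in> (?R - Id)\<^sup>*" by (simp add: rtrancl_r_diff_Id)
  obtain xs where xs: "xs \<noteq> []" "xs ! 0 = a" "last xs = b" "distinct xs" "is_path (?R - Id) xs"
    using rtrancl_dist_path[OF hR] by blast
  have fg: "fin_graph G" using tr unfolding fin_tree_def by blast
  have lastn: "xs ! (length xs - 1) = b" using xs by (simp add: last_conv_nth)
  have l2: "length xs \<ge> 2"
  proof (rule ccontr)
    assume "\<not> ?thesis"
    moreover have "length xs \<noteq> 0" using xs(1) by simp
    ultimately have "length xs = 1" by linarith
    then show False using xs(2) lastn ab by simp
  qed
  have l3: "length xs \<ge> 3"
  proof (rule ccontr)
    assume "\<not> ?thesis"
    then have "length xs = 2" using l2 by simp
    then have "(xs ! 0, xs ! 1) \<in> ?R - Id" using xs(5) unfolding is_path_def by auto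
    moreover have "xs ! 1 = b" using lastn \<open>length xs = 2\<close> by simp
    ultimately show False using xs(2) by simp
  qed
  have steps: "Suc i < length xs \<Longrightarrow> (xs ! i, xs ! Suc i) \<in> edges G" for i
    using xs(5) unfolding is_path_def by blast
  have "has_cycle G"
    unfolding has_cycle_def
  proof (intro exI conjI)
    show "3 \<le> length xs" by (rule l3)
    show "distinct xs" by (rule xs(4))
    show "set xs \<subseteq> verts G"
    proof
      fix v assume "v \<in> set xs"
      then obtain i where i: "i < length xs" "xs ! i = v" by (metis in_set_conv_nth)
      show "v \<in> verts G"
      proof (cases "Suc i < length xs")
        case True
        then show ?thesis using steps[OF True] fg i edge_verts_g by blast
      next
        case False
        then have "i = length xs - 1" using i by simp
        then have "v = b" using i lastn by simp
        then show ?thesis using e fg edge_verts_g by blast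
      qed
    qed
    show "\<forall>i<length xs. (xs ! i, xs ! (Suc i mod length xs)) \<in> edges G"
    proof (intro allI impI)
      fix i assume i: "i < length xs"
      show "(xs ! i, xs ! (Suc i mod length xs)) \<in> edges G"
      proof (cases "Suc i < length xs")
        case True
        then show ?thesis using steps[OF True] by simp
      next
        case False
        then have "Suc i = length xs" using i by simp
        then have "i = length xs - 1" by simp
        then have "xs ! i = b" "xs ! (Suc i mod length xs) = a" using lastn xs(2) \<open>Suc i = length xs\<close> by auto
        then show ?thesis using e fg sym_edge_g by auto
      qed
    qed
  qed
  then show False using tr unfolding fin_tree_def by blast
qed

lemma tree_split:
  assumes tr: "fin_tree G" and e: "(a, b) \<in> edges G" and ab: "a \<noteq> b"
  shows "\<exists>A B. A \<union> B = verts G \<and> a \<in> A \<and> b \<in> B \<and> b \<notin> A \<and> a \<notin> B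
      \<and> conn_set G A \<and> conn_set G B"
proof -
  let ?R = "edges G - {(a, b), (b, a)}"
  have fg: "fin_graph G" using tr unfolding fin_tree_def by blast
  have av: "a \<in> verts G" and bv: "b \<in> verts G" using fg e edge_verts_g by auto
  have be: "(b, a) \<in> edges G" using fg e sym_edge_g by blast
  have R': "?R = edges G - {(b, a), (a, b)}" by blast
  define A where "A = {t\<in>verts G. (a, t) \<in> ?R\<^sup>*}"
  define B where "B = {t\<in>verts G. (b, t) \<in> ?R\<^sup>*}"
  have "conn_set G A" unfolding A_def by (rule reach_conn[OF av _ fg]) blast
  moreover have "conn_set G B" unfolding B_def by (rule reach_conn[OF bv _ fg]) blast
  moreover have "b \<notin> A" unfolding A_def using tree_no_bypass[OF tr e ab] by blast
  moreover have "a \<notin> B" unfolding B_def using tree_no_bypass[OF tr be ab[symmetric]] R' by auto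
  moreover have "A \<union> B = verts G"
  proof
    show "A \<union> B \<subseteq> verts G" unfolding A_def B_def by blast
    show "verts G \<subseteq> A \<union> B"
    proof
      fix t assume t: "t \<in> verts G"
      have c: "conn_set G (verts G)" using tr unfolding fin_tree_def by blast
      have "(a, t) \<in> (edges G)\<^sup>*" by (rule conn_reach[OF c av t])
      then have "(a, t) \<in> ?R\<^sup>* \<or> (b, t) \<in> ?R\<^sup>*"
      proof (induction rule: rtrancl_induct)
        case base then show ?case by simp
      next
        case (step c d)
        show ?case
        proof (cases "(c, d) \<in> ?R")
          case True
          then show ?thesis using step by (meson rtrancl.rtrancl_into_rtrancl)
        next
          case False
          then have "d = a \<or> d = b" using step by blast
          then show ?thesis by auto
        qed
      qed
      then show "t \<in> A \<union> B" unfolding A_def B_def using t by blast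
    qed
  qed
  moreover have "a \<in> A" unfolding A_def using av by simp
  moreover have "b \<in> B" unfolding B_def using bv by simp
  ultimately show ?thesis by blast
qed

locale setting =
  fixes FF :: "fgraph set" and D :: "fgraph \<Rightarrow> fgraph \<Rightarrow> (nat \<Rightarrow> nat) \<Rightarrow> bool"
    and F :: "nat \<Rightarrow> fgraph" and f :: "nat \<Rightarrow> nat \<Rightarrow> nat"
  assumes fam: "proj_fraisse_family FF D"
    and trees: "\<forall>G\<in>FF. fin_tree G"
    and mono: "\<forall>B A g. D B A g \<longrightarrow> monotone_epi B A g"
    and spl: "allows_splitting_edges FF D"
    and fs: "fraisse_sequence FF D F f"
begin

lemmas fam' = fam[unfolded proj_fraisse_family_def]

lemma D_in: "D B A g \<Longrightarrow> B \<in> FF \<and> A \<in> FF \<and> epi B A g"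
  using fam'[THEN conjunct2, THEN conjunct1] by blast

lemma D_id: "A \<in> FF \<Longrightarrow> D A A id"
  using fam'[THEN conjunct2, THEN conjunct2, THEN conjunct2, THEN conjunct1] by blast

lemma D_comp: "D B A g \<Longrightarrow> D C B h \<Longrightarrow> D C A (g \<circ> h)"
  using fam'[THEN conjunct2, THEN conjunct2, THEN conjunct2, THEN conjunct2, THEN conjunct1] by blast

lemma FF_graph: "G \<in> FF \<Longrightarrow> fin_graph G"
  using fam'[THEN conjunct1] by blast

lemma FF_tree: "G \<in> FF \<Longrightarrow> fin_tree G"
  using trees by blast

lemmas fs' = fs[unfolded fraisse_sequence_def]

lemma F_in: "F n \<in> FF" and D_f: "D (F (Suc n)) (F n) (f n)"
  using fs'[THEN conjunct1] by blast+

lemma fs_ext: "D A (F m) h \<Longrightarrow> \<exists>n\<ge>m. \<exists>g. D (F n) A g \<and> (\<forall>x\<in>verts (F n). h (g x) = bond f n m x)"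
  using fs'[THEN conjunct2, THEN conjunct2] by blast

lemma F_graph: "fin_graph (F n)"
  using F_in FF_graph by blast

lemma refl_edge: "fin_graph G \<Longrightarrow> v \<in> verts G \<Longrightarrow> (v, v) \<in> edges G"
  unfolding fin_graph_def by blast

lemma sym_edge: "fin_graph G \<Longrightarrow> (a, b) \<in> edges G \<Longrightarrow> (b, a) \<in> edges G"
  unfolding fin_graph_def by blast

lemma edge_verts: "fin_graph G \<Longrightarrow> (a, b) \<in> edges G \<Longrightarrow> a \<in> verts G \<and> b \<in> verts G"
  unfolding fin_graph_def by blast

lemma epi_img: "epi B A g \<Longrightarrow> g ` verts B = verts A"
  unfolding epi_def by (elim conjE)

lemma epi_verts: "epi B A g \<Longrightarrow> t \<in> verts B \<Longrightarrow> g t \<in> verts A"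
  using epi_img by blast

lemma epi_surj: "epi B A g \<Longrightarrow> a \<in> verts A \<Longrightarrow> \<exists>b\<in>verts B. g b = a"
  using epi_img by (metis imageE)

lemma epi_iff: "epi B A g \<Longrightarrow> (a1, a2) \<in> edges A \<longleftrightarrow>
        (\<exists>b1 b2. b1 \<in> verts B \<and> b2 \<in> verts B \<and> g b1 = a1 \<and> g b2 = a2 \<and> (b1, b2) \<in> edges B)"
  unfolding epi_def by (elim conjE, drule spec, drule spec, assumption)

lemma epi_edge: "epi B A g \<Longrightarrow> (s, t) \<in> edges B \<Longrightarrow> s \<in> verts B \<Longrightarrow> t \<in> verts B
   \<Longrightarrow> (g s, g t) \<in> edges A"
  using epi_iff[of B A g "g s" "g t"] by blast

lemma D_edge: "D B A g \<Longrightarrow> (s, t) \<in> edges B \<Longrightarrow> (g s, g t) \<in> edges A"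
proof -
  assume a: "D B A g" "(s, t) \<in> edges B"
  have "fin_graph B" using D_in[OF a(1)] FF_graph by blast
  then have "s \<in> verts B" "t \<in> verts B" using edge_verts a(2) by blast+
  then show ?thesis using epi_edge[OF _ a(2)] D_in[OF a(1)] by blast
qed

lemma D_verts: "D B A g \<Longrightarrow> t \<in> verts B \<Longrightarrow> g t \<in> verts A"
  using D_in epi_verts by blast

lemma bond_same: "bond f m m = id"
  by (cases m) auto

lemma bond_Suc_low: "n < m \<Longrightarrow> bond f m n x = f n (bond f m (Suc n) x)"
proof (induction m arbitrary: x)
  case 0 then show ?case by simp
next
  case (Suc m)
  show ?case
  proof (cases "n < m")
    case True
    then show ?thesis using Suc by simp
  next
    case False
    then have "n = m" using Suc by simp
    then show ?thesis by (simp add: bond_same)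
  qed
qed

lemma D_bond: "n \<le> m \<Longrightarrow> D (F m) (F n) (bond f m n)"
proof (induction m)
  case 0 then show ?case using D_id[OF F_in, of 0] by (metis bond.simps(1) le_zero_eq)
next
  case (Suc m)
  show ?case
  proof (cases "n \<le> m")
    case True
    then have "D (F (Suc m)) (F n) (bond f m n \<circ> f m)" using Suc D_comp[OF _ D_f] by blast
    then show ?thesis using True by (simp add: comp_def)
  next
    case False
    then have "n = Suc m" using Suc by simp
    then show ?thesis using D_id F_in by (simp add: bond_same id_def)
  qed
qed

abbreviation GG where "GG \<equiv> lim_verts F f"
abbreviation EE where "EE \<equiv> lim_edge F"
abbreviation pi where "pi \<equiv> realization_map F f"

lemma GG_verts: "x \<in> GG \<Longrightarrow> x n \<in> verts (F n)"
  and GG_f: "x \<in> GG \<Longrightarrow> f n (x (Suc n)) = x n"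
  unfolding lim_verts_def by auto

lemma bond_thread: "x \<in> GG \<Longrightarrow> n \<le> m \<Longrightarrow> bond f m n (x m) = x n"
proof (induction m)
  case 0 then show ?case by simp
next
  case (Suc m)
  show ?case
  proof (cases "n \<le> m")
    case True
    then show ?thesis using Suc GG_f by simp
  next
    case False
    then have "n = Suc m" using Suc by simp
    then show ?thesis by (simp add: bond_same)
  qed
qed

lemma thread_diff_up: "x \<in> GG \<Longrightarrow> z \<in> GG \<Longrightarrow> x n \<noteq> z n \<Longrightarrow> n \<le> m \<Longrightarrow> x m \<noteq> z m"
  using bond_thread[of x n m] bond_thread[of z n m] by auto

lemma thread_eq_down: "x \<in> GG \<Longrightarrow> z \<in> GG \<Longrightarrow> x m = z m \<Longrightarrow> n \<le> m \<Longrightarrow> x n = z n"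
  using bond_thread[of x n m] bond_thread[of z n m] by auto

lemma thread_exists:
  assumes t: "t \<in> verts (F k)"
  shows "\<exists>w\<in>GG. w k = t"
proof -
  define u where "u = rec_nat t (\<lambda>i s. SOME s'. s' \<in> verts (F (Suc (k + i))) \<and> f (k + i) s' = s)"
  have u0: "u 0 = t" unfolding u_def by simp
  have uS: "u (Suc i) = (SOME s'. s' \<in> verts (F (Suc (k + i))) \<and> f (k + i) s' = u i)" for i
    unfolding u_def by simp
  have uv: "u i \<in> verts (F (k + i)) \<and> (i > 0 \<longrightarrow> f (k + (i - 1)) (u i) = u (i - 1))" for i
  proof (induction i)
    case 0 then show ?case using t u0 by simp
  next
    case (Suc i)
    have "u i \<in> verts (F (k + i))" using Suc by blast
    then have "\<exists>s'. s' \<in> verts (F (Suc (k + i))) \<and> f (k + i) s' = u i"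
      using epi_surj D_in[OF D_f] by blast
    then have "u (Suc i) \<in> verts (F (Suc (k + i))) \<and> f (k + i) (u (Suc i)) = u i"
      unfolding uS by (rule someI_ex)
    then show ?case by simp
  qed
  define w where "w j = (if j \<le> k then bond f k j t else u (j - k))" for j
  have "w \<in> GG"
    unfolding lim_verts_def
  proof (intro CollectI allI conjI)
    fix j
    show "w j \<in> verts (F j)"
    proof (cases "j \<le> k")
      case True
      then show ?thesis unfolding w_def using D_verts[OF D_bond[OF True] t] by simp
    next
      case False
      then show ?thesis unfolding w_def using uv[of "j - k"] by simp
    qed
    show "f j (w (Suc j)) = w j"
    proof (cases "Suc j \<le> k")
      case True
      then show ?thesis unfolding w_def using bond_Suc_low[of j k t] by simp
    next
      case False
      show ?thesis
      proof (cases "j = k")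
        case True
        then show ?thesis unfolding w_def using uv[of 1] u0 by (simp add: bond_same)
      next
        case False
        with \<open>\<not> Suc j \<le> k\<close> have "j > k" by simp
        then show ?thesis unfolding w_def using uv[of "Suc j - k"]
          by (simp add: Suc_diff_le)
      qed
    qed
  qed
  moreover have "w k = t" unfolding w_def by (simp add: bond_same)
  ultimately show ?thesis by blast
qed

end

lemma verts_split: "verts (split_edge G a b v) = insert v (verts G)"
  by (simp add: split_edge_def verts_def)

lemma edges_split: "edges (split_edge G a b v) =
   (edges G - {(a, b), (b, a)}) \<union> {(a, v), (v, a), (v, b), (b, v), (v, v)}"
  by (simp add: split_edge_def edges_def)

lemma collapse_simp: "collapse v c t = (if t = v then c else t)"
  by (simp add: collapse_def)

context setting
begin

lemma EE_refl: "x \<in> GG \<Longrightarrow> EE x x"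
  unfolding lim_edge_def using refl_edge[OF F_graph] GG_verts by blast

lemma EE_sym: "EE x y \<Longrightarrow> EE y x"
  unfolding lim_edge_def using sym_edge[OF F_graph] by blast

lemma EE_at: "EE x y \<Longrightarrow> (x n, y n) \<in> edges (F n)"
  unfolding lim_edge_def by blast

lemma spl_at: "G \<in> FF \<Longrightarrow> (a, b) \<in> edges G \<Longrightarrow> a \<noteq> b \<Longrightarrow>
   \<exists>v. v \<notin> verts G \<and> split_edge G a b v \<in> FF \<and>
        D (split_edge G a b v) G (collapse v a) \<and> D (split_edge G a b v) G (collapse v b)"
  using spl unfolding allows_splitting_edges_def by blast

lemma diff_level: "x \<in> GG \<Longrightarrow> z \<in> GG \<Longrightarrow> x \<noteq> z \<Longrightarrow> \<exists>n. x n \<noteq> z n"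
  by (metis ext)

lemma split_step:
  assumes u: "u \<in> GG" and w: "w \<in> GG" and uw: "EE u w" and un: "u n \<noteq> w n"
  shows "\<exists>v m g. v \<notin> verts (F n) \<and> m \<ge> n \<and> D (F m) (split_edge (F n) (u n) (w n) v) g \<and>
     g (u m) = v \<and> g (w m) = w n \<and>
     (\<forall>z\<in>GG. z n \<noteq> u n \<longrightarrow> g (z m) = z n)"
proof -
  let ?G = "F n"
  have e: "(u n, w n) \<in> edges ?G" using EE_at[OF uw] .
  obtain v where v: "v \<notin> verts ?G" "split_edge ?G (u n) (w n) v \<in> FF"
    "D (split_edge ?G (u n) (w n) v) ?G (collapse v (u n))"
    using spl_at[OF F_in e un] by blast
  let ?F' = "split_edge ?G (u n) (w n) v"
  let ?h = "collapse v (u n)"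
  obtain m g where m: "m \<ge> n" "D (F m) ?F' g" and hg: "\<forall>t\<in>verts (F m). ?h (g t) = bond f m n t"
    using fs_ext[OF v(3)] by blast
  have thr: "z \<in> GG \<Longrightarrow> ?h (g (z m)) = z n" for z
    using hg GG_verts bond_thread[OF _ m(1)] by metis
  have gen: "z \<in> GG \<Longrightarrow> z n \<noteq> u n \<Longrightarrow> g (z m) = z n" for z
    using thr[of z] by (auto simp: collapse_simp split: if_splits)
  have gw: "g (w m) = w n" using gen[OF w] un by simp
  have unv: "u n \<in> verts ?G" "w n \<in> verts ?G" using GG_verts u w by auto
  have gu_in: "g (u m) \<in> verts ?F'" using D_verts[OF m(2)] GG_verts[OF u] .
  have gu_cases: "g (u m) = v \<or> g (u m) = u n"
    using thr[OF u] by (auto simp: collapse_simp split: if_splits)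
  have eF: "(g (u m), g (w m)) \<in> edges ?F'" using D_edge[OF m(2) EE_at[OF uw]] .
  have gu: "g (u m) = v"
  proof (rule ccontr)
    assume "g (u m) \<noteq> v"
    then have "g (u m) = u n" using gu_cases by blast
    then have "(u n, w n) \<in> edges ?F'" using eF gw by simp
    then show False using v(1) unv by (auto simp: edges_split)
  qed
  show ?thesis using v(1) m gu gw gen by blast
qed

lemma no_three:
  assumes a: "a \<in> GG" and b: "b \<in> GG" and c: "c \<in> GG"
    and ab: "EE a b" and bc: "EE b c" and d: "a \<noteq> b" "b \<noteq> c" "a \<noteq> c"
  shows False
proof -
  obtain n1 where n1: "a n1 \<noteq> b n1" using diff_level[OF a b d(1)] by blast
  obtain n2 where n2: "b n2 \<noteq> c n2" using diff_level[OF b c d(2)] by blast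
  obtain n3 where n3: "a n3 \<noteq> c n3" using diff_level[OF a c d(3)] by blast
  define n where "n = max n1 (max n2 n3)"
  have dn: "a n \<noteq> b n" "b n \<noteq> c n" "a n \<noteq> c n"
    using thread_diff_up[OF a b n1] thread_diff_up[OF b c n2] thread_diff_up[OF a c n3]
    unfolding n_def by auto
  obtain v m g where s: "v \<notin> verts (F n)" "m \<ge> n" "D (F m) (split_edge (F n) (b n) (a n) v) g"
     "g (b m) = v" "g (a m) = a n" "\<forall>z\<in>GG. z n \<noteq> b n \<longrightarrow> g (z m) = z n"
    using split_step[OF b a EE_sym[OF ab]] dn by metis
  have "c n \<noteq> b n" using dn by simp
  then have gc: "g (c m) = c n" using s(6) c by simp
  have "(g (b m), g (c m)) \<in> edges (split_edge (F n) (b n) (a n) v)"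
    using D_edge[OF s(3) EE_at[OF bc]] .
  then have "(v, c n) \<in> edges (split_edge (F n) (b n) (a n) v)" using s(4) gc by simp
  moreover have "c n \<in> verts (F n)" using GG_verts[OF c] .
  ultimately show False using s(1) dn edge_verts[OF F_graph] by (auto simp: edges_split)
qed

lemma EE_trans: "x \<in> GG \<Longrightarrow> y \<in> GG \<Longrightarrow> z \<in> GG \<Longrightarrow> EE x y \<Longrightarrow> EE y z \<Longrightarrow> EE x z"
  using no_three EE_refl by metis

lemma pi_eq: "x \<in> GG \<Longrightarrow> y \<in> GG \<Longrightarrow> EE x y \<Longrightarrow> pi x = pi y"
  unfolding realization_map_def using EE_trans EE_sym by blast

lemma pull_side:
  assumes u: "u \<in> GG" and w: "w \<in> GG" and uw: "EE u w" and un: "u n \<noteq> w n"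
    and C: "C \<subseteq> verts (F n)" and cC: "conn_set (F n) C" and wC: "w n \<notin> C"
  shows "\<exists>m T. T \<subseteq> verts (F m) \<and> conn_set (F m) T \<and> u m \<notin> T \<and> w m \<notin> T \<and>
     (\<forall>z\<in>GG. z n \<in> C \<and> z n \<noteq> u n \<longrightarrow> z m \<in> T)"
proof -
  obtain v m g where s: "v \<notin> verts (F n)" "m \<ge> n" "D (F m) (split_edge (F n) (u n) (w n) v) g"
     "g (u m) = v" "g (w m) = w n" "\<forall>z\<in>GG. z n \<noteq> u n \<longrightarrow> g (z m) = z n"
    using split_step[OF u w uw un] by metis
  let ?F' = "split_edge (F n) (u n) (w n) v"
  define T where "T = {t\<in>verts (F m). g t \<in> C}"
  have vC: "v \<notin> C" using s(1) C by blast
  have cong: "\<forall>s\<in>C. \<forall>t\<in>C. (s, t) \<in> edges (F n) \<longleftrightarrow> (s, t) \<in> edges ?F'"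
    using vC wC by (auto simp: edges_split)
  have cC': "conn_set ?F' C" using cC conn_set_cong[OF cong] by simp
  have C': "C \<subseteq> verts ?F'" using C by (auto simp: verts_split)
  have me: "monotone_epi (F m) ?F' g" using mono s(3) by blast
  have "conn_set (F m) T" unfolding T_def by (rule mono_preimage_conn[OF me C' cC'])
  moreover have "u m \<notin> T" unfolding T_def using s(4) vC by simp
  moreover have "w m \<notin> T" unfolding T_def using s(5) wC by simp
  moreover have "\<forall>z\<in>GG. z n \<in> C \<and> z n \<noteq> u n \<longrightarrow> z m \<in> T"
    unfolding T_def using s(6) GG_verts by auto
  moreover have "T \<subseteq> verts (F m)" unfolding T_def by blast
  ultimately show ?thesis by blast
qed

lemma two_side:
  assumes x: "x \<in> GG" and y: "y \<in> GG" and xy: "EE x y" "x \<noteq> y"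
    and z: "z1 \<in> GG" "z2 \<in> GG" "z3 \<in> GG"
    and zx: "z1 \<noteq> x" "z2 \<noteq> x" "z3 \<noteq> x" and zy: "z1 \<noteq> y" "z2 \<noteq> y" "z3 \<noteq> y"
  shows "\<exists>m T. T \<subseteq> verts (F m) \<and> conn_set (F m) T \<and> x m \<notin> T \<and> y m \<notin> T \<and>
     ((z1 m \<in> T \<and> z2 m \<in> T) \<or> (z1 m \<in> T \<and> z3 m \<in> T) \<or> (z2 m \<in> T \<and> z3 m \<in> T))"
proof -
  obtain n0 where n0: "x n0 \<noteq> y n0" using diff_level[OF x y xy(2)] by blast
  obtain n1 where n1: "z1 n1 \<noteq> x n1" using diff_level[OF z(1) x zx(1)] by blast
  obtain n2 where n2: "z2 n2 \<noteq> x n2" using diff_level[OF z(2) x zx(2)] by blast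
  obtain n3 where n3: "z3 n3 \<noteq> x n3" using diff_level[OF z(3) x zx(3)] by blast
  obtain n4 where n4: "z1 n4 \<noteq> y n4" using diff_level[OF z(1) y zy(1)] by blast
  obtain n5 where n5: "z2 n5 \<noteq> y n5" using diff_level[OF z(2) y zy(2)] by blast
  obtain n6 where n6: "z3 n6 \<noteq> y n6" using diff_level[OF z(3) y zy(3)] by blast
  define n where "n = n0 + n1 + n2 + n3 + n4 + n5 + n6"
  have le: "n0 \<le> n" "n1 \<le> n" "n2 \<le> n" "n3 \<le> n" "n4 \<le> n" "n5 \<le> n" "n6 \<le> n"
    unfolding n_def by linarith+
  have d0: "x n \<noteq> y n" using thread_diff_up[OF x y n0 le(1)] .
  have d1: "z1 n \<noteq> x n" "z2 n \<noteq> x n" "z3 n \<noteq> x n"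
    using thread_diff_up[OF z(1) x n1 le(2)] thread_diff_up[OF z(2) x n2 le(3)]
      thread_diff_up[OF z(3) x n3 le(4)] by auto
  have d2: "z1 n \<noteq> y n" "z2 n \<noteq> y n" "z3 n \<noteq> y n"
    using thread_diff_up[OF z(1) y n4 le(5)] thread_diff_up[OF z(2) y n5 le(6)]
      thread_diff_up[OF z(3) y n6 le(7)] by auto
  have tr: "fin_tree (F n)" using FF_tree F_in by blast
  obtain A B where AB: "A \<union> B = verts (F n)" "x n \<in> A" "y n \<in> B" "y n \<notin> A" "x n \<notin> B"
      "conn_set (F n) A" "conn_set (F n) B"
    using tree_split[OF tr EE_at[OF xy(1)] d0] by blast
  have zin: "z1 n \<in> A \<union> B" "z2 n \<in> A \<union> B" "z3 n \<in> A \<union> B"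
    using AB(1) GG_verts z by auto
  have A2: ?thesis if h: "(z1 n \<in> A \<and> z2 n \<in> A) \<or> (z1 n \<in> A \<and> z3 n \<in> A) \<or> (z2 n \<in> A \<and> z3 n \<in> A)"
  proof -
    obtain m T where mT: "T \<subseteq> verts (F m)" "conn_set (F m) T" "x m \<notin> T" "y m \<notin> T"
       "\<forall>z\<in>GG. z n \<in> A \<and> z n \<noteq> x n \<longrightarrow> z m \<in> T"
      using pull_side[OF x y xy(1) d0 _ AB(6) AB(4)] AB(1) by blast
    have "z1 n \<in> A \<Longrightarrow> z1 m \<in> T" "z2 n \<in> A \<Longrightarrow> z2 m \<in> T" "z3 n \<in> A \<Longrightarrow> z3 m \<in> T"
      using mT(5) z d1 by auto
    then show ?thesis using mT(1-4) h by blast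
  qed
  have B2: ?thesis if h: "(z1 n \<in> B \<and> z2 n \<in> B) \<or> (z1 n \<in> B \<and> z3 n \<in> B) \<or> (z2 n \<in> B \<and> z3 n \<in> B)"
  proof -
    obtain m T where mT: "T \<subseteq> verts (F m)" "conn_set (F m) T" "y m \<notin> T" "x m \<notin> T"
       "\<forall>z\<in>GG. z n \<in> B \<and> z n \<noteq> y n \<longrightarrow> z m \<in> T"
      using pull_side[OF y x EE_sym[OF xy(1)] d0[symmetric] _ AB(7) AB(5)] AB(1) by blast
    have "z1 n \<in> B \<Longrightarrow> z1 m \<in> T" "z2 n \<in> B \<Longrightarrow> z2 m \<in> T" "z3 n \<in> B \<Longrightarrow> z3 m \<in> T"
      using mT(5) z d2 by auto
    then show ?thesis using mT(1-4) h by blast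
  qed
  show ?thesis using zin A2 B2 by blast
qed

end

lemma pig:
  fixes Q :: "'a \<Rightarrow> nat \<Rightarrow> bool"
  assumes L: "finite L" and ex: "\<forall>k. \<exists>l\<in>L. Q l k"
    and mo: "\<And>l k k'. Q l k' \<Longrightarrow> k \<le> k' \<Longrightarrow> Q l k"
  shows "\<exists>l\<in>L. \<forall>k. Q l k"
proof (rule ccontr)
  assume "\<not> ?thesis"
  then have "\<forall>l\<in>L. \<exists>k. \<not> Q l k" by blast
  then obtain kk where kk: "\<forall>l\<in>L. \<not> Q l (kk l)" by metis
  define K where "K = Max (kk ` L)"
  obtain l where l: "l \<in> L" "Q l K" using ex by blast
  have "kk l \<le> K" unfolding K_def using L l(1) by simp
  then have "Q l (kk l)" using mo l(2) by blast
  then show False using kk l(1) by blast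
qed

context setting
begin

lemma PiE_GG: "GG \<subseteq> (\<Pi>\<^sub>E n\<in>UNIV. verts (F n))"
  using GG_verts by (auto simp: PiE_iff)

lemma lim_top_space: "topspace (lim_topology F f) = GG"
  unfolding lim_topology_def using PiE_GG by auto

lemma lim_open_nbhd:
  assumes O: "openin (lim_topology F f) Wo" and w: "w \<in> Wo"
  shows "\<exists>k. \<forall>u\<in>GG. u k = w k \<longrightarrow> u \<in> Wo"
proof -
  obtain S where S: "openin (product_topology (\<lambda>n. discrete_topology (verts (F n))) UNIV) S"
      "Wo = S \<inter> GG"
    using O unfolding lim_topology_def openin_subtopology by blast
  have wS: "w \<in> S" "w \<in> GG" using w S(2) by auto
  obtain U where U: "finite {i \<in> UNIV. U i \<noteq> topspace (discrete_topology (verts (F i)))}"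
      "\<forall>i\<in>UNIV. openin (discrete_topology (verts (F i))) (U i)"
      "w \<in> Pi\<^sub>E UNIV U" "Pi\<^sub>E UNIV U \<subseteq> S"
    using S(1) wS(1) unfolding openin_product_topology_alt by blast
  define J where "J = {i \<in> UNIV. U i \<noteq> topspace (discrete_topology (verts (F i)))}"
  have fJ: "finite J" using U(1) unfolding J_def .
  define k where "k = Max (insert 0 J)"
  have Jk: "i \<in> J \<Longrightarrow> i \<le> k" for i unfolding k_def using fJ by simp
  have "u \<in> Wo" if u: "u \<in> GG" "u k = w k" for u
  proof -
    have "u i \<in> U i" for i
    proof (cases "i \<in> J")
      case True
      then have "u i = w i" using thread_eq_down[OF u(1) wS(2) u(2) Jk[OF True]] by simp
      then show ?thesis using U(3) by (auto simp: PiE_iff)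
    next
      case False
      then have "U i = verts (F i)" unfolding J_def by simp
      then show ?thesis using GG_verts[OF u(1)] by simp
    qed
    then have "u \<in> Pi\<^sub>E UNIV U" by (auto simp: PiE_iff)
    then show ?thesis using U(4) S(2) u(1) by blast
  qed
  then show ?thesis by blast
qed

definition real_pred where
  "real_pred U \<longleftrightarrow> U \<subseteq> pi ` GG \<and> openin (lim_topology F f) {x \<in> GG. pi x \<in> U}"

lemma istop_real: "istopology real_pred"
  unfolding istopology_def
proof (intro conjI allI impI)
  fix S T assume S: "real_pred S" and T: "real_pred T"
  have eq: "{x \<in> GG. pi x \<in> S \<inter> T} = {x \<in> GG. pi x \<in> S} \<inter> {x \<in> GG. pi x \<in> T}" by blast
  show "real_pred (S \<inter> T)"
    using S T unfolding real_pred_def eq by (auto intro: openin_Int)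
next
  fix K assume K: "\<forall>U\<in>K. real_pred U"
  have eq: "{x \<in> GG. pi x \<in> \<Union>K} = \<Union>((\<lambda>U. {x \<in> GG. pi x \<in> U}) ` K)" by blast
  have "openin (lim_topology F f) (\<Union>((\<lambda>U. {x \<in> GG. pi x \<in> U}) ` K))"
    using K unfolding real_pred_def by (intro openin_Union) blast
  then show "real_pred (\<Union>K)"
    using K unfolding real_pred_def eq by blast
qed

lemma real_open: "openin (realization F f) U \<longleftrightarrow>
   U \<subseteq> pi ` GG \<and> openin (lim_topology F f) {x \<in> GG. pi x \<in> U}"
proof -
  have "realization F f = topology real_pred"
    unfolding realization_def real_pred_def by simp
  then show ?thesis using istop_real by (simp add: real_pred_def)
qed

lemma real_top: "topspace (realization F f) = pi ` GG"
proof
  show "topspace (realization F f) \<subseteq> pi ` GG"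
    using real_open openin_topspace by blast
  have "{x \<in> GG. pi x \<in> pi ` GG} = GG" by blast
  then have "openin (realization F f) (pi ` GG)"
    unfolding real_open using openin_topspace[of "lim_topology F f"] lim_top_space by simp
  then show "pi ` GG \<subseteq> topspace (realization F f)" by (rule openin_subset)
qed

lemma edge_down:
  assumes "z1 \<in> GG" "z2 \<in> GG" "(z1 k', z2 k') \<in> edges (F k')" "k \<le> k'"
  shows "(z1 k, z2 k) \<in> edges (F k)"
  using D_edge[OF D_bond[OF assms(4)] assms(3)] bond_thread[OF assms(1) assms(4)]
    bond_thread[OF assms(2) assms(4)] by simp

lemma finite_verts: "finite (verts (F n))"
  using F_graph unfolding fin_graph_def by blast

end

context setting
begin

lemma conn_img:
  assumes T: "T \<subseteq> verts (F m)" and cT: "conn_set (F m) T"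
  shows "connectedin (realization F f) (pi ` {z\<in>GG. z m \<in> T})"
proof -
  define Z where "Z = {z\<in>GG. z m \<in> T}"
  have Tk: "conn_set (F k) {t\<in>verts (F k). bond f k m t \<in> T}" if "m \<le> k" for k
  proof -
    have "monotone_epi (F k) (F m) (bond f k m)" using mono D_bond[OF that] by blast
    then show ?thesis using mono_preimage_conn T cT by blast
  qed
  have ZG: "Z \<subseteq> GG" unfolding Z_def by blast
  show ?thesis
    unfolding connectedin Z_def[symmetric]
  proof (intro conjI notI)
    show "pi ` Z \<subseteq> topspace (realization F f)" using real_top ZG by blast
    assume "\<exists>E1 E2. openin (realization F f) E1 \<and> openin (realization F f) E2 \<and>
         pi ` Z \<subseteq> E1 \<union> E2 \<and> E1 \<inter> E2 \<inter> pi ` Z = {} \<and> E1 \<inter> pi ` Z \<noteq> {} \<and> E2 \<inter> pi ` Z \<noteq> {}"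
    then obtain E1 E2 where E: "openin (realization F f) E1" "openin (realization F f) E2"
         "pi ` Z \<subseteq> E1 \<union> E2" "E1 \<inter> E2 \<inter> pi ` Z = {}" "E1 \<inter> pi ` Z \<noteq> {}" "E2 \<inter> pi ` Z \<noteq> {}"
      by blast
    define Z1 where "Z1 = {z\<in>Z. pi z \<in> E1}"
    define Z2 where "Z2 = {z\<in>Z. pi z \<in> E2}"
    have Zcov: "z \<in> Z1 \<or> z \<in> Z2" if z: "z \<in> Z" for z
    proof -
      have "pi z \<in> E1 \<union> E2" using E(3) imageI[OF z, of pi] by (rule subsetD)
      then show ?thesis unfolding Z1_def Z2_def using z by simp
    qed
    have Zdisj: "z \<notin> Z2" if z: "z \<in> Z1" for z
    proof
      assume "z \<in> Z2"
      then have "pi z \<in> E1 \<inter> E2 \<inter> pi ` Z" using z unfolding Z1_def Z2_def by auto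
      then show False using E(4) by simp
    qed
    have Z1ne: "Z1 \<noteq> {}" using E(5) unfolding Z1_def by blast
    have Z2ne: "Z2 \<noteq> {}" using E(6) unfolding Z2_def by blast
    have Z1G: "Z1 \<subseteq> Z" "Z2 \<subseteq> Z" unfolding Z1_def Z2_def by auto
    have o1: "openin (lim_topology F f) {x \<in> GG. pi x \<in> E1}"
      using E(1) unfolding real_open by (elim conjE)
    have nb1: "\<exists>k. \<forall>u\<in>GG. u k = z k \<longrightarrow> pi u \<in> E1" if "z \<in> GG" "pi z \<in> E1" for z
    proof -
      have "z \<in> {x \<in> GG. pi x \<in> E1}" using that by simp
      from lim_open_nbhd[OF o1 this] obtain k where "\<forall>u\<in>GG. u k = z k \<longrightarrow> u \<in> {x \<in> GG. pi x \<in> E1}" by blast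
      then show ?thesis by auto
    qed
    have o2: "openin (lim_topology F f) {x \<in> GG. pi x \<in> E2}"
      using E(2) unfolding real_open by (elim conjE)
    have nb2: "\<exists>k. \<forall>u\<in>GG. u k = z k \<longrightarrow> pi u \<in> E2" if "z \<in> GG" "pi z \<in> E2" for z
    proof -
      have "z \<in> {x \<in> GG. pi x \<in> E2}" using that by simp
      from lim_open_nbhd[OF o2 this] obtain k where "\<forall>u\<in>GG. u k = z k \<longrightarrow> u \<in> {x \<in> GG. pi x \<in> E2}" by blast
      then show ?thesis by auto
    qed
    show False
    proof (cases "\<forall>k. \<exists>z1\<in>Z1. \<exists>z2\<in>Z2. (z1 k, z2 k) \<in> edges (F k)")
      case True
      define good where "good k p \<longleftrightarrow> (\<forall>k'. \<exists>z1\<in>Z1. \<exists>z2\<in>Z2. z1 k = fst p \<and> z2 k = snd p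
          \<and> (z1 k', z2 k') \<in> edges (F k'))" for k p
      have base: "\<exists>p. good 0 p"
      proof -
        have "\<exists>l\<in>verts (F 0) \<times> verts (F 0). \<forall>k'. \<exists>z1\<in>Z1. \<exists>z2\<in>Z2. z1 0 = fst l \<and> z2 0 = snd l
            \<and> (z1 k', z2 k') \<in> edges (F k')"
        proof (rule pig)
          show "finite (verts (F 0) \<times> verts (F 0))" using finite_verts by simp
          show "\<forall>k. \<exists>l\<in>verts (F 0) \<times> verts (F 0). \<exists>z1\<in>Z1. \<exists>z2\<in>Z2. z1 0 = fst l \<and> z2 0 = snd l
            \<and> (z1 k, z2 k) \<in> edges (F k)"
          proof
            fix k
            obtain z1 z2 where z: "z1 \<in> Z1" "z2 \<in> Z2" "(z1 k, z2 k) \<in> edges (F k)" using True by blast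
            have zG: "z1 \<in> GG" "z2 \<in> GG" using z(1,2) Z1G ZG by blast+
            have mem: "(z1 0, z2 0) \<in> verts (F 0) \<times> verts (F 0)" using GG_verts[OF zG(1)] GG_verts[OF zG(2)] by simp
            show "\<exists>l\<in>verts (F 0) \<times> verts (F 0). \<exists>z1\<in>Z1. \<exists>z2\<in>Z2. z1 0 = fst l \<and> z2 0 = snd l
              \<and> (z1 k, z2 k) \<in> edges (F k)"
              using z mem by (intro bexI[of _ "(z1 0, z2 0)"]) auto
          qed
          show "\<exists>z1\<in>Z1. \<exists>z2\<in>Z2. z1 0 = fst l \<and> z2 0 = snd l \<and> (z1 k, z2 k) \<in> edges (F k)"
            if hh: "\<exists>z1\<in>Z1. \<exists>z2\<in>Z2. z1 0 = fst l \<and> z2 0 = snd l \<and> (z1 k', z2 k') \<in> edges (F k')" "k \<le> k'"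
            for l k k'
          proof -
            obtain z1 z2 where z: "z1 \<in> Z1" "z2 \<in> Z2" "z1 0 = fst l" "z2 0 = snd l" "(z1 k', z2 k') \<in> edges (F k')"
              using hh(1) by blast
            have zG: "z1 \<in> GG" "z2 \<in> GG" using z(1,2) Z1G ZG by blast+
            have "(z1 k, z2 k) \<in> edges (F k)" using edge_down[OF zG z(5) hh(2)] .
            then show ?thesis using z by blast
          qed
        qed
        then show ?thesis unfolding good_def by blast
      qed
      have step: "\<exists>p'. good (Suc k) p' \<and> f k (fst p') = fst p \<and> f k (snd p') = snd p"
        if g: "good k p" for k p
      proof -
        let ?L = "verts (F (Suc k)) \<times> verts (F (Suc k))"
        have "\<exists>l\<in>?L. \<forall>k'. \<exists>z1\<in>Z1. \<exists>z2\<in>Z2. z1 (Suc k) = fst l \<and> z2 (Suc k) = snd l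
            \<and> z1 k = fst p \<and> z2 k = snd p \<and> (z1 k', z2 k') \<in> edges (F k')"
        proof (rule pig)
          show "finite ?L" using finite_verts by simp
          show "\<forall>k'. \<exists>l\<in>?L. \<exists>z1\<in>Z1. \<exists>z2\<in>Z2. z1 (Suc k) = fst l \<and> z2 (Suc k) = snd l
            \<and> z1 k = fst p \<and> z2 k = snd p \<and> (z1 k', z2 k') \<in> edges (F k')"
          proof
            fix k'
            obtain z1 z2 where z: "z1 \<in> Z1" "z2 \<in> Z2" "z1 k = fst p" "z2 k = snd p"
                "(z1 k', z2 k') \<in> edges (F k')" using g unfolding good_def by blast
            have zG: "z1 \<in> GG" "z2 \<in> GG" using z(1,2) Z1G ZG by blast+
            have mem: "(z1 (Suc k), z2 (Suc k)) \<in> ?L" using GG_verts[OF zG(1)] GG_verts[OF zG(2)] by simp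
            show "\<exists>l\<in>?L. \<exists>z1\<in>Z1. \<exists>z2\<in>Z2. z1 (Suc k) = fst l \<and> z2 (Suc k) = snd l
              \<and> z1 k = fst p \<and> z2 k = snd p \<and> (z1 k', z2 k') \<in> edges (F k')"
              using z mem by (intro bexI[of _ "(z1 (Suc k), z2 (Suc k))"]) auto
          qed
          show "\<exists>z1\<in>Z1. \<exists>z2\<in>Z2. z1 (Suc k) = fst l \<and> z2 (Suc k) = snd l
              \<and> z1 k = fst p \<and> z2 k = snd p \<and> (z1 k'', z2 k'') \<in> edges (F k'')"
            if hh: "\<exists>z1\<in>Z1. \<exists>z2\<in>Z2. z1 (Suc k) = fst l \<and> z2 (Suc k) = snd l
              \<and> z1 k = fst p \<and> z2 k = snd p \<and> (z1 k', z2 k') \<in> edges (F k')" "k'' \<le> k'"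
            for l k'' k'
          proof -
            obtain z1 z2 where z: "z1 \<in> Z1" "z2 \<in> Z2" "z1 (Suc k) = fst l" "z2 (Suc k) = snd l"
              "z1 k = fst p" "z2 k = snd p" "(z1 k', z2 k') \<in> edges (F k')"
              using hh(1) by blast
            have zG: "z1 \<in> GG" "z2 \<in> GG" using z(1,2) Z1G ZG by blast+
            have "(z1 k'', z2 k'') \<in> edges (F k'')" using edge_down[OF zG z(7) hh(2)] .
            then show ?thesis using z by blast
          qed
        qed
        then obtain l where l: "\<forall>k'. \<exists>z1\<in>Z1. \<exists>z2\<in>Z2. z1 (Suc k) = fst l \<and> z2 (Suc k) = snd l
            \<and> z1 k = fst p \<and> z2 k = snd p \<and> (z1 k', z2 k') \<in> edges (F k')" by blast
        have "good (Suc k) l" unfolding good_def using l by blast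
        moreover obtain z1 z2 where z: "z1 \<in> Z1" "z2 \<in> Z2" "z1 (Suc k) = fst l" "z2 (Suc k) = snd l"
            "z1 k = fst p" "z2 k = snd p" using l by blast
        moreover have "f k (z1 (Suc k)) = z1 k" "f k (z2 (Suc k)) = z2 k"
          using z(1,2) Z1G ZG GG_f by blast+
        ultimately show ?thesis by metis
      qed
      define ab where "ab = rec_nat (SOME p. good 0 p)
          (\<lambda>k p. SOME p'. good (Suc k) p' \<and> f k (fst p') = fst p \<and> f k (snd p') = snd p)"
      have ab0: "ab 0 = (SOME p. good 0 p)" unfolding ab_def by simp
      have abS: "ab (Suc k) = (SOME p'. good (Suc k) p' \<and> f k (fst p') = fst (ab k) \<and> f k (snd p') = snd (ab k))" for k
        unfolding ab_def by simp
      have abg: "good k (ab k)" for k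
      proof (induction k)
        case 0 then show ?case unfolding ab0 using base by (rule someI_ex)
      next
        case (Suc k)
        from someI_ex[OF step[OF Suc]] show ?case unfolding abS by blast
      qed
      have abf: "f k (fst (ab (Suc k))) = fst (ab k) \<and> f k (snd (ab (Suc k))) = snd (ab k)" for k
        using someI_ex[OF step[OF abg[of k]]] unfolding abS by blast
      define a where "a k = fst (ab k)" for k
      define b where "b k = snd (ab k)" for k
      have wit: "\<exists>z1\<in>Z1. \<exists>z2\<in>Z2. z1 k = a k \<and> z2 k = b k \<and> (z1 k', z2 k') \<in> edges (F k')" for k k'
        using abg[of k] unfolding good_def a_def b_def by blast
      have aG: "a \<in> GG" "b \<in> GG"
      proof -
        have "a k \<in> verts (F k) \<and> b k \<in> verts (F k)" for k
        proof -
          obtain z1 z2 where z: "z1 \<in> Z1" "z2 \<in> Z2" "z1 k = a k" "z2 k = b k" using wit[of k k] by blast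
          have zG: "z1 \<in> GG" "z2 \<in> GG" using z(1,2) Z1G ZG by blast+
          show ?thesis using GG_verts[OF zG(1), of k] GG_verts[OF zG(2), of k] z(3,4) by simp
        qed
        then show "a \<in> GG" "b \<in> GG" unfolding lim_verts_def a_def b_def using abf by auto
      qed
      have abE: "EE a b" unfolding lim_edge_def
      proof
        fix n
        obtain z1 z2 where z: "z1 \<in> Z1" "z2 \<in> Z2" "z1 n = a n" "z2 n = b n" "(z1 n, z2 n) \<in> edges (F n)"
          using wit[of n n] by blast
        then show "(a n, b n) \<in> edges (F n)" by simp
      qed
      have aZ: "a \<in> Z" "b \<in> Z"
      proof -
        obtain z1 z2 where "z1 \<in> Z1" "z2 \<in> Z2" "z1 m = a m" "z2 m = b m" using wit[of m m] by blast
        then show "a \<in> Z" "b \<in> Z" using aG Z1G unfolding Z_def by auto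
      qed
      have pa: "pi a \<in> E1"
      proof (rule ccontr)
        assume "pi a \<notin> E1"
        then have "pi a \<in> E2" using Zcov[OF aZ(1)] unfolding Z1_def Z2_def by blast
        then obtain k where k: "\<forall>u\<in>GG. u k = a k \<longrightarrow> pi u \<in> E2" using nb2 aG by blast
        obtain z1 where z1: "z1 \<in> Z1" "z1 k = a k" using wit[of k k] by blast
        have "z1 \<in> GG" using z1(1) Z1G ZG by blast
        then have "pi z1 \<in> E2" using k z1(2) by blast
        then have "z1 \<in> Z2" using z1 Z1G unfolding Z2_def by blast
        then show False using Zdisj z1 by blast
      qed
      have pb: "pi b \<in> E2"
      proof (rule ccontr)
        assume "pi b \<notin> E2"
        then have "pi b \<in> E1" using Zcov[OF aZ(2)] unfolding Z1_def Z2_def by blast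
        then obtain k where k: "\<forall>u\<in>GG. u k = b k \<longrightarrow> pi u \<in> E1" using nb1 aG by blast
        obtain z2 where z2: "z2 \<in> Z2" "z2 k = b k" using wit[of k k] by blast
        have "z2 \<in> GG" using z2(1) Z1G ZG by blast
        then have "pi z2 \<in> E1" using k z2(2) by blast
        then have "z2 \<in> Z1" using z2 Z1G unfolding Z1_def by blast
        then show False using Zdisj z2 by blast
      qed
      have "pi a = pi b" using pi_eq[OF aG abE] .
      then have "a \<in> Z1" "a \<in> Z2" using pa pb aZ unfolding Z1_def Z2_def by auto
      then show False using Zdisj by blast
    next
      case False
      then obtain k where nk: "\<forall>z1\<in>Z1. \<forall>z2\<in>Z2. (z1 k, z2 k) \<notin> edges (F k)" by blast
      define k' where "k' = max k m"
      have nk': "(z1 k', z2 k') \<notin> edges (F k')" if "z1 \<in> Z1" "z2 \<in> Z2" for z1 z2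
      proof
        assume e: "(z1 k', z2 k') \<in> edges (F k')"
        have zG: "z1 \<in> GG" "z2 \<in> GG" using that Z1G ZG by blast+
        have "k \<le> k'" unfolding k'_def by simp
        from edge_down[OF zG e this] show False using nk that by blast
      qed
      have mk: "m \<le> k'" unfolding k'_def by simp
      let ?P = "(\<lambda>z. z k') ` Z1"
      let ?Q = "(\<lambda>z. z k') ` Z2"
      have "\<exists>p\<in>?P. \<exists>q\<in>?Q. (p, q) \<in> edges (F k')"
      proof (rule conn_setD[OF Tk[OF mk]])
        show "?P \<noteq> {}" "?Q \<noteq> {}" using Z1ne Z2ne by auto
        show "?P \<inter> ?Q = {}"
        proof (rule ccontr)
          assume "?P \<inter> ?Q \<noteq> {}"
          then obtain z1 z2 where z: "z1 \<in> Z1" "z2 \<in> Z2" "z1 k' = z2 k'" by blast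
          have "(z1 k', z1 k') \<in> edges (F k')" using refl_edge[OF F_graph] GG_verts z Z1G ZG by blast
          then show False using nk'[OF z(1,2)] z(3) by simp
        qed
        show "?P \<union> ?Q = {t \<in> verts (F k'). bond f k' m t \<in> T}"
        proof
          show "?P \<union> ?Q \<subseteq> {t \<in> verts (F k'). bond f k' m t \<in> T}"
          proof
            fix t assume "t \<in> ?P \<union> ?Q"
            then obtain z where z: "z \<in> Z" "t = z k'" using Z1G by blast
            then have "z \<in> GG" "z m \<in> T" unfolding Z_def by auto
            then show "t \<in> {t \<in> verts (F k'). bond f k' m t \<in> T}"
              using z(2) GG_verts bond_thread[OF _ mk] by simp
          qed
          show "{t \<in> verts (F k'). bond f k' m t \<in> T} \<subseteq> ?P \<union> ?Q"
          proof
            fix t assume t: "t \<in> {t \<in> verts (F k'). bond f k' m t \<in> T}"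
            then obtain w where w: "w \<in> GG" "w k' = t" using thread_exists by blast
            then have "w m \<in> T" using t bond_thread[OF w(1) mk] by simp
            then have "w \<in> Z" unfolding Z_def using w by simp
            then have "w \<in> Z1 \<or> w \<in> Z2" using Zcov by blast
            then show "t \<in> ?P \<union> ?Q" using w(2) by blast
          qed
        qed
      qed
      then show False using nk' by blast
    qed
  qed
qed

end

lemma three_elems:
  assumes "infinite C \<or> card C > 2"
  shows "\<exists>a b c. a \<in> C \<and> b \<in> C \<and> c \<in> C \<and> a \<noteq> b \<and> a \<noteq> c \<and> b \<noteq> c"
proof -
  obtain D where D: "D \<subseteq> C" "card D = 3"
  proof (cases "finite C")
    case True
    then have "3 \<le> card C" using assms by simp
    then show ?thesis using obtain_subset_with_card_n that by metis
  next
    case False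
    then show ?thesis using infinite_arbitrarily_large[OF False, of 3] that by blast
  qed
  then obtain a b c where "D = {a, b, c}" "a \<noteq> b" "b \<noteq> c" "a \<noteq> c" unfolding card_3_iff by blast
  then show ?thesis using D(1) by blast
qed

context setting
begin

lemma main_loc:
  assumes ram: "ramification_point (realization F f) p"
  shows "\<exists>!p'. p' \<in> GG \<and> pi p' = p"
proof -
  let ?X = "realization F f"
  have pt: "p \<in> topspace ?X" using ram unfolding ramification_point_def by blast
  then obtain x where x: "x \<in> GG" "pi x = p" using real_top by auto
  show ?thesis
  proof (rule ex1I[of _ x])
    show "x \<in> GG \<and> pi x = p" using x by blast
    fix y assume y: "y \<in> GG \<and> pi y = p"
    show "y = x"
    proof (rule ccontr)
      assume yx: "y \<noteq> x"
      have "y \<in> pi y" unfolding realization_map_def using y EE_refl by blast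
      then have "y \<in> pi x" using x y by simp
      then have xy: "EE x y" unfolding realization_map_def by blast
      have onlyxy: "z = x \<or> z = y" if z: "z \<in> GG" "pi z = p" for z
      proof (rule ccontr)
        assume nz: "\<not> (z = x \<or> z = y)"
        have "z \<in> pi z" unfolding realization_map_def using z EE_refl by blast
        then have "z \<in> pi x" using x z by simp
        then have "EE x z" unfolding realization_map_def by blast
        then show False using no_three[OF conjunct1[OF y] x(1) z(1) EE_sym[OF xy]] yx nz by blast
      qed
      define S where "S = topspace ?X - {p}"
      define CC where "CC = connected_components_of (subtopology ?X S)"
      have "infinite CC \<or> card CC > 2" using ram unfolding ramification_point_def CC_def S_def Let_def
        by (elim conjE)
      from three_elems[OF this] obtain c1 c2 c3 where c: "c1 \<in> CC" "c2 \<in> CC" "c3 \<in> CC" "c1 \<noteq> c2" "c1 \<noteq> c3" "c2 \<noteq> c3"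
        by (elim exE conjE) (rule that, assumption+)
      have pick: "\<exists>z. z \<in> GG \<and> pi z \<in> c \<and> pi z \<in> S \<and> z \<noteq> x \<and> z \<noteq> y" if c: "c \<in> CC" for c
      proof -
        obtain q where q: "q \<in> c" using nonempty_connected_components_of c unfolding CC_def by blast
        have "q \<in> topspace (subtopology ?X S)"
          using connected_components_of_subset c q unfolding CC_def by blast
        then have qS: "q \<in> topspace ?X" "q \<in> S" unfolding S_def by auto
        then obtain z where z: "z \<in> GG" "pi z = q" using real_top by auto
        have "pi z \<noteq> p" using qS(2) z(2) unfolding S_def by blast
        then have "z \<noteq> x" "z \<noteq> y" using x y by auto
        then show ?thesis using z q qS by blast
      qed
      obtain z1 where z1: "z1 \<in> GG" "pi z1 \<in> c1" "pi z1 \<in> S" "z1 \<noteq> x" "z1 \<noteq> y" using pick[OF c(1)] by blast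
      obtain z2 where z2: "z2 \<in> GG" "pi z2 \<in> c2" "pi z2 \<in> S" "z2 \<noteq> x" "z2 \<noteq> y" using pick[OF c(2)] by blast
      obtain z3 where z3: "z3 \<in> GG" "pi z3 \<in> c3" "pi z3 \<in> S" "z3 \<noteq> x" "z3 \<noteq> y" using pick[OF c(3)] by blast
      obtain m T where mT: "T \<subseteq> verts (F m)" "conn_set (F m) T" "x m \<notin> T" "y m \<notin> T"
        "(z1 m \<in> T \<and> z2 m \<in> T) \<or> (z1 m \<in> T \<and> z3 m \<in> T) \<or> (z2 m \<in> T \<and> z3 m \<in> T)"
        using two_side[OF x(1) conjunct1[OF y] xy yx[symmetric] z1(1) z2(1) z3(1) z1(4) z2(4) z3(4)
            z1(5) z2(5) z3(5)] by blast
      define K where "K = pi ` {z\<in>GG. z m \<in> T}"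
      have Kc: "connectedin ?X K" unfolding K_def by (rule conn_img[OF mT(1,2)])
      have KS: "K \<subseteq> S"
      proof
        fix q assume "q \<in> K"
        then obtain z where z: "z \<in> GG" "z m \<in> T" "q = pi z" unfolding K_def by blast
        have "q \<in> topspace ?X" using z real_top by auto
        moreover have "q \<noteq> p"
        proof
          assume "q = p"
          then have "z = x \<or> z = y" using onlyxy z by blast
          then show False using z(2) mT(3,4) by blast
        qed
        ultimately show "q \<in> S" unfolding S_def by blast
      qed
      have KcS: "connectedin (subtopology ?X S) K" using Kc KS connectedin_subtopology by blast
      have same: "ca = cb" if ca: "ca \<in> CC" "cb \<in> CC" and q: "qa \<in> ca" "qb \<in> cb" "qa \<in> K" "qb \<in> K"
        for ca cb qa qb
      proof -
        have "K \<subseteq> ca"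
          using connected_components_of_maximal[of ca "subtopology ?X S" K] ca(1) KcS q(1,3)
          unfolding CC_def disjnt_def by blast
        moreover have "K \<subseteq> cb"
          using connected_components_of_maximal[of cb "subtopology ?X S" K] ca(2) KcS q(2,4)
          unfolding CC_def disjnt_def by blast
        ultimately have "qa \<in> ca \<inter> cb" using q by blast
        moreover have "pairwise disjnt CC"
          unfolding CC_def by (rule pairwise_disjoint_connected_components_of)
        ultimately show ?thesis using ca unfolding pairwise_def disjnt_def by blast
      qed
      have inK: "z m \<in> T \<Longrightarrow> z \<in> GG \<Longrightarrow> pi z \<in> K" for z unfolding K_def by blast
      from mT(5) show False
      proof (elim disjE conjE)
        assume "z1 m \<in> T" "z2 m \<in> T"
        then show False using same[OF c(1,2) z1(2) z2(2) inK inK] z1(1) z2(1) c(4) by blast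
      next
        assume "z1 m \<in> T" "z3 m \<in> T"
        then show False using same[OF c(1,3) z1(2) z3(2) inK inK] z1(1) z3(1) c(5) by blast
      next
        assume "z2 m \<in> T" "z3 m \<in> T"
        then show False using same[OF c(2,3) z2(2) z3(2) inK inK] z2(1) z3(1) c(6) by blast
      qed
    qed
  qed
qed

end

theorem mainTheorem2:
  fixes \<F> :: "fgraph set"
    and D :: "fgraph \<Rightarrow> fgraph \<Rightarrow> (nat \<Rightarrow> nat) \<Rightarrow> bool"
    and F :: "nat \<Rightarrow> fgraph" and f :: "nat \<Rightarrow> nat \<Rightarrow> nat"
    and p :: "(nat \<Rightarrow> nat) set"
  assumes "proj_fraisse_family \<F> D"
    and "\<forall>G\<in>\<F>. fin_tree G"
    and "\<forall>B A g. D B A g \<longrightarrow> monotone_epi B A g"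
    and "allows_splitting_edges \<F> D"
    and "fraisse_sequence \<F> D F f"
    and "ramification_point (realization F f) p"
  shows "\<exists>!p'. p' \<in> lim_verts F f \<and> realization_map F f p' = p"
proof -
  interpret setting \<F> D F f
    using assms(1-5) by (unfold_locales)
  show ?thesis using main_loc[OF assms(6)] .
qed

end
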